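(* Let $(\Omega(\mathcal{A}),\mathrm{d},\bar{\mathrm{d}})$ be a bidifferential graded algebra, and let $M,N,m\ge1$. Let $X$ ($N\times N$, invertible), $Y$ ($M\times N$), $P$, $R$ ($N\times N$) and $Q$ ($N\times M$) be matrices over $\mathcal{A}$ with $\mathrm{d}R=0$, $\mathrm{d}Q=0$, $\bar{\mathrm{d}}X=(\mathrm{d}X)P$, $\bar{\mathrm{d}}Y=(\mathrm{d}Y)P$ and $RX+QY=XP$, and put $\Phi=YX^{-1}$. Let $\Delta$ be an $m\times m$ matrix over $\mathcal{A}$ with $\bar{\mathrm{d}}\Delta=(\mathrm{d}\Delta)\Delta$, let $\mathcal{C}$ be an $m\times N$ matrix over $\mathcal{A}$ with $\mathrm{d}\mathcal{C}=0$, and let $G$ be an $m\times N$ matrix over $\mathcal{A}$ such that $$\bar{\mathrm{d}}(GX)=\mathrm{d}(GX)\,P,\qquad (GX)P-\Delta(GX)=\mathcal{C}X .$$ Then $\bar{\mathrm{d}}G+G\,Q\,\mathrm{d}\Phi=\mathrm{d}(\Delta G)$. Moreover, suppose $Q=VU^T$ with $U$ an $M\times m$ and $V$ an $N\times m$ matrix over $\mathcal{A}$ satisfying $\mathrm{d}U=\bar{\mathrm{d}}U=\mathrm{d}V=\bar{\mathrm{d}}V=0$, and suppose $GV$ is invertible. Then $g:=(GV)^{-1}$ satisfies $$\bar{\mathrm{d}}g^{-1}+g^{-1}\,\mathrm{d}\phi'=\mathrm{d}(\Delta g^{-1})\quad\text{with }\phi'=U^T\Phi V,$$ and consequently $\m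athrm{d}\big([\bar{\mathrm{d}}g-(\mathrm{d}g)\Delta]\,g^{-1}\big)=0$.
   Context: $\mathcal{A}$ is a unital associative algebra over $\mathbb{C}$ with identity $I$. A bidifferential graded algebra $(\Omega(\mathcal{A}),\mathrm{d},\bar{\mathrm{d}})$ consists of a graded associative algebra $\Omega(\mathcal{A})=\bigoplus_{r\ge 0}\Omega^r(\mathcal{A})$ with $\Omega^0(\mathcal{A})=\mathcal{A}$ (each $\Omega^r(\mathcal{A})$ an $\mathcal{A}$-bimodule) together with two linear maps $\mathrm{d},\bar{\mathrm{d}}:\Omega^r(\mathcal{A})\to\Omega^{r+1}(\mathcal{A})$ satisfying the graded Leibniz rule $\mathrm{d}(\alpha\beta)=(\mathrm{d}\alpha)\beta+(-1)^r\alpha\,\mathrm{d}\beta$ for $\alpha\in\Omega^r(\mathcal{A})$ (and likewise for $\bar{\mathrm{d}}$), and $\mathrm{d}^2=\bar{\mathrm{d}}^2=0$, $\mathrm{d}\bar{\mathrm{d}}+\bar{\mathrm{d}}\mathrm{d}=0$. The maps $\mathrm{d},\bar{\mathrm{d}}$ are applied entrywise to matrices with entries in $\Omega(\mathcal{A})$, and products of such matrices use the matrix product together with the product of $\Omega(\mathcal{A})$. $U^T$ denotes the transpose. *)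

theory Defs
  imports Complex_Main "Jordan_Normal_Form.Matrix"
begin

text \<open>The total algebra Omega is the type 'w (a unital
associative ring), made into a complex algebra by the scalar action sc. The graded pieces are
Om r; Omega is their internal direct sum; the base algebra A is Om 0.\<close>

locale bidga =
  fixes Om :: "nat \<Rightarrow> 'w::ring_1 set"
    and sc :: "complex \<Rightarrow> 'w \<Rightarrow> 'w"
    and d :: "'w \<Rightarrow> 'w"
    and db :: "'w \<Rightarrow> 'w"
  assumes sc_add: "sc a (x + y) = sc a x + sc a y"
    and sc_add_scalar: "sc (a + b) x = sc a x + sc b x"
    and sc_mult_scalar: "sc (a * b) x = sc a (sc b x)"
    and sc_one: "sc 1 x = x"
    and sc_mult_left: "sc a (x * y) = sc a x * y"
    and sc_mult_right: "sc a (x * y) = x * sc a y"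
    and Om_zero: "0 \<in> Om r"
    and Om_add: "x \<in> Om r \<Longrightarrow> y \<in> Om r \<Longrightarrow> x + y \<in> Om r"
    and Om_uminus: "x \<in> Om r \<Longrightarrow> - x \<in> Om r"
    and Om_sc: "x \<in> Om r \<Longrightarrow> sc a x \<in> Om r"
    and Om_mult: "x \<in> Om r \<Longrightarrow> y \<in> Om s \<Longrightarrow> x * y \<in> Om (r + s)"
    and Om_one: "1 \<in> Om 0"
    and Om_span: "\<exists>n f. (\<forall>r<n. f r \<in> Om r) \<and> w = (\<Sum>r<n. f r)"
    and Om_indep: "(\<forall>r<n. f r \<in> Om r) \<Longrightarrow> (\<Sum>r<n. f r) = 0 \<Longrightarrow> \<forall>r<n. f r = 0"
    and d_add: "d (x + y) = d x + d y"
    and d_sc: "d (sc a x) = sc a (d x)"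
    and d_deg: "x \<in> Om r \<Longrightarrow> d x \<in> Om (Suc r)"
    and d_leibniz: "x \<in> Om r \<Longrightarrow> d (x * y) = d x * y + (-1) ^ r * x * d y"
    and db_add: "db (x + y) = db x + db y"
    and db_sc: "db (sc a x) = sc a (db x)"
    and db_deg: "x \<in> Om r \<Longrightarrow> db x \<in> Om (Suc r)"
    and db_leibniz: "x \<in> Om r \<Longrightarrow> db (x * y) = db x * y + (-1) ^ r * x * db y"
    and d_d: "d (d x) = 0"
    and db_db: "db (db x) = 0"
    and d_db_anti: "d (db x) + db (d x) = 0"

definition invertible_over :: "'a::ring_1 set \<Rightarrow> 'a mat \<Rightarrow> bool" where
  "invertible_over S A \<longleftrightarrow> square_mat A \<and>
     (\<exists>B. elements_mat B \<subseteq> S \<and> inverts_mat A B \<and> inverts_mat B A)"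

definition minv :: "'a::ring_1 mat \<Rightarrow> 'a mat" where
  "minv A = (SOME B. inverts_mat A B \<and> inverts_mat B A)"

end

theory Submission
  imports Defs
begin


lemma der_zero:
  fixes D :: "'a::ring_1 \<Rightarrow> 'a"
  assumes add: "\<And>x y. D (x+y) = D x + D y"
  shows "D (0::'a::ring_1) = 0"
proof -
  have "D 0 = D 0 + D 0" using add[of 0 0] by simp
  then show ?thesis by simp
qed

lemma der_sum:
  fixes D :: "'a::ring_1 \<Rightarrow> 'a"
  assumes add: "\<And>x y. D (x+y) = D x + D y"
  shows "D (sum f I) = (\<Sum>i\<in>I. D (f i :: 'a::ring_1))"
proof (induction I rule: infinite_finite_induct)
  case (infinite A) then show ?case using der_zero[OF add] by simp
next
  case empty then show ?case using der_zero[OF add] by simp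
next
  case (insert x F) then show ?case by (simp add: add)
qed

lemma mat_der_mult:
  fixes A B :: "'a::ring_1 mat" and D :: "'a \<Rightarrow> 'a"
  assumes add: "\<And>x y. D (x+y) = D x + D y"
    and leib: "\<And>x y. x \<in> S \<Longrightarrow> D (x*y) = D x * y + x * D y"
    and A: "A \<in> carrier_mat n k" and B: "B \<in> carrier_mat k l" and S: "elements_mat A \<subseteq> S"
  shows "map_mat D (A*B) = map_mat D A * B + A * map_mat D B"
proof (rule eq_matI)
  fix i j assume ij: "i < dim_row (map_mat D A * B + A * map_mat D B)" "j < dim_col (map_mat D A * B + A * map_mat D B)"
  then have i: "i < n" and j: "j < l" using A B by auto
  have el: "\<And>t. t < k \<Longrightarrow> A $$ (i,t) \<in> S" using S A i by blast
  have "map_mat D (A*B) $$ (i,j) = D (\<Sum>t<k. A $$ (i,t) * B $$ (t,j))"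
    using A B i j by (simp add: scalar_prod_def atLeast0LessThan)
  also have "\<dots> = (\<Sum>t<k. D (A $$ (i,t)) * B $$ (t,j) + A $$ (i,t) * D (B $$ (t,j)))"
    by (simp add: der_sum[OF add] leib el)
  also have "\<dots> = (map_mat D A * B + A * map_mat D B) $$ (i,j)"
    using A B i j by (simp add: scalar_prod_def atLeast0LessThan sum.distrib)
  finally show "map_mat D (A*B) $$ (i,j) = (map_mat D A * B + A * map_mat D B) $$ (i,j)" .
qed (use A B in auto)

lemma mat_der_add:
  fixes A B :: "'a::ring_1 mat" and D :: "'a \<Rightarrow> 'a"
  assumes add: "\<And>x y. D (x+y) = D x + D y"
    and A: "A \<in> carrier_mat n k" and B: "B \<in> carrier_mat n k"
  shows "map_mat D (A+B) = map_mat D A + map_mat D B"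
  by (rule eq_matI) (use A B add in auto)

lemma der_minus:
  fixes D :: "'a::ring_1 \<Rightarrow> 'a"
  assumes add: "\<And>x y. D (x+y) = D x + D y"
  shows "D ((x::'a::ring_1) - y) = D x - D y"
proof -
  have "D x = D (x - y) + D y" using add[of "x-y" y] by simp
  then show ?thesis by (simp add: algebra_simps)
qed

lemma mat_der_minus:
  fixes A B :: "'a::ring_1 mat" and D :: "'a \<Rightarrow> 'a"
  assumes add: "\<And>x y. D (x+y) = D x + D y"
    and A: "A \<in> carrier_mat n k" and B: "B \<in> carrier_mat n k"
  shows "map_mat D (A-B) = map_mat D A - map_mat D B"
  by (rule eq_matI) (use A B der_minus[OF add] in auto)

lemma elements_mult:
  fixes A B :: "'a::ring_1 mat"
  assumes A: "A \<in> carrier_mat n k" and B: "B \<in> carrier_mat k l"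
    and SA: "elements_mat A \<subseteq> S" and SB: "elements_mat B \<subseteq> S"
    and S0: "0 \<in> S" and Sadd: "\<And>x y. x \<in> S \<Longrightarrow> y \<in> S \<Longrightarrow> x + y \<in> S"
    and Smult: "\<And>x y. x \<in> S \<Longrightarrow> y \<in> S \<Longrightarrow> x * y \<in> S"
  shows "elements_mat (A*B) \<subseteq> S"
proof
  fix a assume "a \<in> elements_mat (A*B)"
  then obtain i j where ij: "i < n" "j < l" "a = (A*B) $$ (i,j)" using A B by force
  have sumS: "\<And>f (I::nat set). (\<And>t. t \<in> I \<Longrightarrow> f t \<in> S) \<Longrightarrow> sum f I \<in> S"
  proof -
    fix f and I :: "nat set" assume h: "\<And>t. t \<in> I \<Longrightarrow> f t \<in> S"
    show "sum f I \<in> S" using h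
      by (induction I rule: infinite_finite_induct) (auto simp: S0 Sadd)
  qed
  have "a = (\<Sum>t\<in>{0..<k}. A $$ (i,t) * B $$ (t,j))"
    using ij A B by (simp add: scalar_prod_def)
  also have "\<dots> \<in> S"
    apply (rule sumS)
    using SA SB A B ij by (intro Smult) auto
  finally show "a \<in> S" .
qed

lemma elements_transpose:
  assumes "elements_mat U \<subseteq> S" shows "elements_mat (transpose_mat U) \<subseteq> S"
proof
  fix a assume "a \<in> elements_mat (transpose_mat U)"
  from elements_matD[OF this] obtain i j where ij0: "i < dim_row (transpose_mat U)" "j < dim_col (transpose_mat U)" "a = transpose_mat U $$ (i,j)"
    by metis
  have ij: "i < dim_col U" "j < dim_row U" "a = U $$ (j,i)" using ij0 by simp_all
  have "U \<in> carrier_mat (dim_row U) (dim_col U)" by (rule carrier_matI) simp_all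
  from elements_matI[OF this ij(2) ij(1) ij(3)] have "a \<in> elements_mat U" .
  then show "a \<in> S" using assms by (rule subsetD[rotated])
qed

lemma inverts_dims:
  fixes A B :: "'a::ring_1 mat"
  assumes "A \<in> carrier_mat n n" "inverts_mat A B" "inverts_mat B A"
  shows "B \<in> carrier_mat n n"
proof -
  have rA: "dim_row A = n" "dim_col A = n" using assms(1) by auto
  have e1: "A * B = 1\<^sub>m n" using assms(2) rA unfolding inverts_mat_def by simp
  have e2: "B * A = 1\<^sub>m (dim_row B)"
    using assms(3) unfolding inverts_mat_def by simp
  have "dim_col (A*B) = n" unfolding e1 by simp
  then have c: "dim_col B = n" by simp
  have "dim_col (B*A) = dim_row B" unfolding e2 by simp
  then have "dim_row B = n" using rA by simp
  then show ?thesis using c by (intro carrier_matI)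
qed
lemma inverts_unique:
  fixes A B B' :: "'a::ring_1 mat"
  assumes A: "A \<in> carrier_mat n n" and "inverts_mat A B" "inverts_mat B A" "inverts_mat A B'" "inverts_mat B' A"
  shows "B' = B"
proof -
  have B: "B \<in> carrier_mat n n" and B': "B' \<in> carrier_mat n n" using inverts_dims assms by blast+
  have "B' = B' * (A * B)" using assms A B' unfolding inverts_mat_def by simp
  also have "\<dots> = (B' * A) * B" using A B B' by simp
  also have "\<dots> = B" using assms B B' unfolding inverts_mat_def by simp
  finally show ?thesis .
qed

lemma minv_props:
  fixes A :: "'a::ring_1 mat"
  assumes inv: "invertible_over S A" and A: "A \<in> carrier_mat n n"
  shows "minv A \<in> carrier_mat n n" "elements_mat (minv A) \<subseteq> S" "A * minv A = 1\<^sub>m n"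
    "minv A * A = 1\<^sub>m n" "minv (minv A) = A"
proof -
  obtain B where B: "elements_mat B \<subseteq> S" "inverts_mat A B" "inverts_mat B A"
    using inv unfolding invertible_over_def by metis
  have Bc: "B \<in> carrier_mat n n" using inverts_dims A B by blast
  have "inverts_mat A (minv A) \<and> inverts_mat (minv A) A"
    unfolding minv_def by (rule someI[of _ B]) (use B in auto)
  then have mB: "minv A = B" using inverts_unique[OF A] B by blast
  show c: "minv A \<in> carrier_mat n n" using mB Bc by simp
  show "elements_mat (minv A) \<subseteq> S" using mB B by simp
  show "A * minv A = 1\<^sub>m n" using mB B A unfolding inverts_mat_def by simp
  show "minv A * A = 1\<^sub>m n" using mB B Bc unfolding inverts_mat_def by simp
  have "inverts_mat B (minv B) \<and> inverts_mat (minv B) B"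
    unfolding minv_def by (rule someI[of _ A]) (use B in auto)
  then show "minv (minv A) = A" using inverts_unique[OF Bc] B mB by metis
qed
lemma map_one_mat:
  fixes D :: "'a::ring_1 \<Rightarrow> 'a"
  assumes "D 0 = 0" "D 1 = 0" shows "map_mat D (1\<^sub>m n) = 0\<^sub>m n n"
  by (rule eq_matI) (use assms in auto)

lemma map_zero_mat:
  fixes D :: "'a::ring_1 \<Rightarrow> 'a"
  assumes "D 0 = 0" shows "map_mat D (0\<^sub>m n k) = 0\<^sub>m n k"
  by (rule eq_matI) (use assms in auto)

lemma mat_add_cancel:
  fixes A B C :: "'a::ring_1 mat"
  assumes "A \<in> carrier_mat n k" "B \<in> carrier_mat n k" "C \<in> carrier_mat n k" "A + C = B + C"
  shows "A = B"
proof (rule eq_matI)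
  fix i j assume "i < dim_row B" "j < dim_col B"
  then have "(A + C) $$ (i,j) = (B + C) $$ (i,j)" using assms(4) by simp
  then show "A $$ (i,j) = B $$ (i,j)" using assms(1-3) \<open>i < dim_row B\<close> \<open>j < dim_col B\<close> by simp
qed (use assms in auto)

lemma mat_diff0:
  fixes A B :: "'a::ring_1 mat"
  assumes "A \<in> carrier_mat n k" "B \<in> carrier_mat n k" "A - B = 0\<^sub>m n k"
  shows "A = B"
proof (rule eq_matI)
  fix i j assume "i < dim_row B" "j < dim_col B"
  then have "(A - B) $$ (i,j) = 0\<^sub>m n k $$ (i,j)" using assms(3) by simp
  then show "A $$ (i,j) = B $$ (i,j)" using assms(1-2) \<open>i < dim_row B\<close> \<open>j < dim_col B\<close> by simp
qed (use assms in auto)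

lemma mat_add_zero_neg:
  fixes A B :: "'a::ring_1 mat"
  assumes "A \<in> carrier_mat n k" "B \<in> carrier_mat n k" "A + B = 0\<^sub>m n k"
  shows "A = - B"
proof (rule eq_matI)
  fix i j assume "i < dim_row (-B)" "j < dim_col (-B)"
  then have "(A + B) $$ (i,j) = 0\<^sub>m n k $$ (i,j)" using assms(3) by simp
  then show "A $$ (i,j) = (-B) $$ (i,j)" using assms(1-2) \<open>i < dim_row (-B)\<close> \<open>j < dim_col (-B)\<close>
    by (simp add: eq_neg_iff_add_eq_0)
qed (use assms in auto)

lemma mat_add_eq_minus:
  fixes A B C :: "'a::ring_1 mat"
  assumes "A \<in> carrier_mat n k" "B \<in> carrier_mat n k" "C \<in> carrier_mat n k" "A + B = C"
  shows "A = C - B"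
proof (rule eq_matI)
  fix i j assume "i < dim_row (C - B)" "j < dim_col (C - B)"
  then have "(A + B) $$ (i,j) = C $$ (i,j)" using assms(4) by simp
  then show "A $$ (i,j) = (C - B) $$ (i,j)" using assms(1-3) \<open>i < dim_row (C-B)\<close> \<open>j < dim_col (C-B)\<close>
    by (simp add: algebra_simps)
qed (use assms in auto)




lemma part1:
  fixes Om :: "nat \<Rightarrow> 'w::ring_1 set" and sc :: "complex \<Rightarrow> 'w \<Rightarrow> 'w"
    and d db :: "'w \<Rightarrow> 'w"
    and M N m :: nat
    and X Y P R Q Phi Delta C G :: "'w mat"
  assumes bd: "bidga Om sc d db"
    and X: "X \<in> carrier_mat N N" "elements_mat X \<subseteq> Om 0" "invertible_over (Om 0) X"
    and Y: "Y \<in> carrier_mat M N" "elements_mat Y \<subseteq> Om 0"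
    and P: "P \<in> carrier_mat N N" "elements_mat P \<subseteq> Om 0"
    and R: "R \<in> carrier_mat N N" "elements_mat R \<subseteq> Om 0"
    and Q: "Q \<in> carrier_mat N M" "elements_mat Q \<subseteq> Om 0"
    and dR: "map_mat d R = 0\<^sub>m N N"
    and dQ: "map_mat d Q = 0\<^sub>m N M"
    and dbX: "map_mat db X = map_mat d X * P"
    and RXQY: "R * X + Q * Y = X * P"
    and Phi: "Phi = Y * minv X"
    and Delta: "Delta \<in> carrier_mat m m" "elements_mat Delta \<subseteq> Om 0"
    and C: "C \<in> carrier_mat m N" "elements_mat C \<subseteq> Om 0"
    and dC: "map_mat d C = 0\<^sub>m m N"
    and G: "G \<in> carrier_mat m N" "elements_mat G \<subseteq> Om 0"
    and dbGX: "map_mat db (G * X) = map_mat d (G * X) * P"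
    and GXP: "G * X * P - Delta * (G * X) = C * X"
  shows "map_mat db G + G * Q * map_mat d Phi = map_mat d (Delta * G)"
proof -
  interpret B: bidga Om sc d db by (rule bd)
  have addd: "\<And>x y. d (x+y) = d x + d y" by (rule B.d_add)
  have adddb: "\<And>x y. db (x+y) = db x + db y" by (rule B.db_add)
  have leibd: "\<And>x y. x \<in> Om 0 \<Longrightarrow> d (x*y) = d x * y + x * d y"
    using B.d_leibniz by (metis mult_1 power_0)
  have leibdb: "\<And>x y. x \<in> Om 0 \<Longrightarrow> db (x*y) = db x * y + x * db y"
    using B.db_leibniz by (metis mult_1 power_0)
  have Om0mult: "\<And>x y. x \<in> Om 0 \<Longrightarrow> y \<in> Om 0 \<Longrightarrow> x * y \<in> Om 0"
    using B.Om_mult by (metis add_0)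
  note EM = elements_mult[OF _ _ _ _ B.Om_zero B.Om_add Om0mult]
  have dM: "\<And>A B n k l. A \<in> carrier_mat n k \<Longrightarrow> B \<in> carrier_mat k l \<Longrightarrow> elements_mat A \<subseteq> Om 0
     \<Longrightarrow> map_mat d (A*B) = map_mat d A * B + A * map_mat d B"
    by (rule mat_der_mult[where S="Om 0"], rule addd, erule leibd, assumption+)
  have dbM: "\<And>A B n k l. A \<in> carrier_mat n k \<Longrightarrow> B \<in> carrier_mat k l \<Longrightarrow> elements_mat A \<subseteq> Om 0
     \<Longrightarrow> map_mat db (A*B) = map_mat db A * B + A * map_mat db B"
    by (rule mat_der_mult[where S="Om 0"], rule adddb, erule leibdb, assumption+)
  define Xi where "Xi = minv X"
  note XI = minv_props[OF X(3) X(1), folded Xi_def]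
  have cXi: "Xi \<in> carrier_mat N N" by (rule XI(1))
  have cPhi: "Phi \<in> carrier_mat M N" unfolding Phi Xi_def[symmetric] using Y(1) cXi by simp
  have elPhi: "elements_mat Phi \<subseteq> Om 0" unfolding Phi Xi_def[symmetric] by (rule EM[OF Y(1) cXi Y(2) XI(2)])
  have cdG: "map_mat d G \<in> carrier_mat m N" using G(1) by simp
  have cdbG: "map_mat db G \<in> carrier_mat m N" using G(1) by simp
  have cdX: "map_mat d X \<in> carrier_mat N N" using X(1) by simp
  have cdPhi: "map_mat d Phi \<in> carrier_mat M N" using cPhi by simp
  have a1: "map_mat db (G*X) = map_mat db G * X + G * map_mat db X" by (rule dbM[OF G(1) X(1) G(2)])
  have a2: "map_mat d (G*X) = map_mat d G * X + G * map_mat d X" by (rule dM[OF G(1) X(1) G(2)])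
  have "map_mat db G * X + G * (map_mat d X * P) = map_mat d (G*X) * P"
    using a1 dbGX dbX by simp
  also have "\<dots> = map_mat d G * X * P + G * map_mat d X * P"
    unfolding a2 by (rule add_mult_distrib_mat[of _ m N]) (use G(1) X(1) P(1) cdG cdX in auto)
  also have "\<dots> = map_mat d G * X * P + G * (map_mat d X * P)"
    using G(1) cdX P(1) by simp
  finally have "map_mat db G * X + G * (map_mat d X * P) = map_mat d G * X * P + G * (map_mat d X * P)" .
  then have s1: "map_mat db G * X = map_mat d G * X * P"
    by (rule mat_add_cancel[rotated 3]) (use G(1) X(1) P(1) cdG cdX cdbG in auto)
  define T where "T = R + Q * Phi"
  have cT: "T \<in> carrier_mat N N" unfolding T_def using R(1) Q(1) cPhi by simp
  have s2: "X * P * Xi = T"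
  proof -
    have "X * P * Xi = (R * X + Q * Y) * Xi" using RXQY by simp
    also have "\<dots> = R * X * Xi + Q * Y * Xi"
      by (rule add_mult_distrib_mat[of _ N N]) (use R(1) X(1) Q(1) Y(1) cXi in auto)
    also have "\<dots> = R * (X * Xi) + Q * (Y * Xi)"
      using R(1) X(1) Q(1) Y(1) cXi by simp
    also have "\<dots> = T" unfolding T_def Phi Xi_def[symmetric] XI(3) using R(1) by simp
    finally show ?thesis .
  qed
  have s3: "map_mat db G = map_mat d G * T"
  proof -
    have "map_mat db G = map_mat db G * (X * Xi)" unfolding XI(3) using cdbG by simp
    also have "\<dots> = map_mat db G * X * Xi" using cdbG X(1) cXi by simp
    also have "\<dots> = map_mat d G * X * P * Xi" unfolding s1 ..
    also have "\<dots> = map_mat d G * (X * P * Xi)" unfolding assoc_mult_mat[OF cdG X(1) P(1)]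
      by (rule assoc_mult_mat[OF cdG _ cXi]) (use X(1) P(1) in simp)
    finally show ?thesis unfolding s2 .
  qed
  have s4: "G * T - Delta * G = C"
  proof -
    have "C = C * (X * Xi)" unfolding XI(3) using C(1) by simp
    also have "\<dots> = (C * X) * Xi" using C(1) X(1) cXi by simp
    also have "\<dots> = (G * X * P - Delta * (G * X)) * Xi" unfolding GXP ..
    also have "\<dots> = G * X * P * Xi - Delta * (G * X) * Xi"
      by (rule minus_mult_distrib_mat[of _ m N]) (use G(1) X(1) P(1) Delta(1) cXi in auto)
    also have "G * X * P * Xi = G * (X * P * Xi)" unfolding assoc_mult_mat[OF G(1) X(1) P(1)]
      by (rule assoc_mult_mat[OF G(1) _ cXi]) (use X(1) P(1) in simp)
    also have "Delta * (G * X) * Xi = Delta * G * (X * Xi)"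
      by (simp only: assoc_mult_mat[OF Delta(1) mult_carrier_mat[OF G(1) X(1)] cXi]
        assoc_mult_mat[OF G(1) X(1) cXi] assoc_mult_mat[OF Delta(1) G(1) mult_carrier_mat[OF X(1) cXi]])
    finally show ?thesis unfolding s2 XI(3) using Delta(1) G(1) by simp
  qed
  have dT: "map_mat d T = Q * map_mat d Phi"
  proof -
    have "map_mat d T = map_mat d R + map_mat d (Q * Phi)" unfolding T_def
      by (rule mat_der_add[OF addd]) (use R(1) Q(1) cPhi in auto)
    also have "map_mat d (Q * Phi) = map_mat d Q * Phi + Q * map_mat d Phi" by (rule dM[OF Q(1) cPhi Q(2)])
    finally show ?thesis unfolding dR dQ using Q(1) cPhi cdPhi by simp
  qed
  have s5: "map_mat d (G * T) - map_mat d (Delta * G) = 0\<^sub>m m N"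
  proof -
    have "map_mat d (G * T) - map_mat d (Delta * G) = map_mat d (G * T - Delta * G)"
      by (rule mat_der_minus[OF addd, symmetric]) (use G(1) cT Delta(1) in auto)
    then show ?thesis unfolding s4 dC .
  qed
  have s6: "map_mat d (G * T) = map_mat d (Delta * G)"
    by (rule mat_diff0[OF _ _ s5]) (use G(1) cT Delta(1) in auto)
  have "map_mat d (G * T) = map_mat d G * T + G * (Q * map_mat d Phi)"
    unfolding dT[symmetric] by (rule dM[OF G(1) cT G(2)])
  then show ?thesis using s6 s3 G(1) Q(1) cdPhi by simp
qed



lemma comb1:
  fixes A B C :: "'a::ring_1 mat"
  assumes "A \<in> carrier_mat n k" "B \<in> carrier_mat n k" "C \<in> carrier_mat n k"
  shows "(A - B) + (B + C) = A + C"
  by (rule eq_matI) (use assms in auto)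

lemma comb2:
  fixes A B :: "'a::ring_1 mat"
  assumes "A \<in> carrier_mat n k" "B \<in> carrier_mat n k"
  shows "- A + B = B - A"
  by (rule eq_matI) (use assms in auto)

lemma add_eq_minus2:
  fixes A B C :: "'a::ring_1 mat"
  assumes "A \<in> carrier_mat n k" "B \<in> carrier_mat n k" "C \<in> carrier_mat n k" "A + B = C"
  shows "B = C - A"
proof -
  have "B + A = C" using assms by (simp add: comm_add_mat)
  then show ?thesis by (rule mat_add_eq_minus[OF assms(2,1,3)])
qed

lemma dd0:
  fixes D :: "'a::zero \<Rightarrow> 'a"
  assumes "\<And>x. D (D x) = 0"
  shows "map_mat D (map_mat D A) = 0\<^sub>m (dim_row A) (dim_col A)"
  by (rule eq_matI) (use assms in auto)

lemma part2:
  fixes Om :: "nat \<Rightarrow> 'w::ring_1 set" and sc :: "complex \<Rightarrow> 'w \<Rightarrow> 'w"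
    and d db :: "'w \<Rightarrow> 'w"
    and M N m :: nat
    and Q Phi Delta G U V :: "'w mat"
  assumes bd: "bidga Om sc d db"
    and Q: "Q \<in> carrier_mat N M"
    and Phi: "Phi \<in> carrier_mat M N" "elements_mat Phi \<subseteq> Om 0"
    and Delta: "Delta \<in> carrier_mat m m" "elements_mat Delta \<subseteq> Om 0"
    and G: "G \<in> carrier_mat m N" "elements_mat G \<subseteq> Om 0"
    and H1: "map_mat db G + G * Q * map_mat d Phi = map_mat d (Delta * G)"
    and U: "U \<in> carrier_mat M m" "elements_mat U \<subseteq> Om 0"
    and V: "V \<in> carrier_mat N m" "elements_mat V \<subseteq> Om 0"
    and QVU: "Q = V * transpose_mat U"
    and dU: "map_mat d U = 0\<^sub>m M m" and dV: "map_mat d V = 0\<^sub>m N m" and dbV: "map_mat db V = 0\<^sub>m N m"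
    and inv: "invertible_over (Om 0) (G * V)"
  shows "let g = minv (G * V); phi' = transpose_mat U * Phi * V in
        map_mat db (minv g) + minv g * map_mat d phi' = map_mat d (Delta * minv g) \<and>
        map_mat d ((map_mat db g - map_mat d g * Delta) * minv g) = 0\<^sub>m m m"
proof -
  interpret B: bidga Om sc d db by (rule bd)
  have addd: "\<And>x y. d (x+y) = d x + d y" by (rule B.d_add)
  have adddb: "\<And>x y. db (x+y) = db x + db y" by (rule B.db_add)
  have leibd: "\<And>x y. x \<in> Om 0 \<Longrightarrow> d (x*y) = d x * y + x * d y"
    using B.d_leibniz by (metis mult_1 power_0)
  have leibdb: "\<And>x y. x \<in> Om 0 \<Longrightarrow> db (x*y) = db x * y + x * db y"
    using B.db_leibniz by (metis mult_1 power_0)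
  have Om0mult: "\<And>x y. x \<in> Om 0 \<Longrightarrow> y \<in> Om 0 \<Longrightarrow> x * y \<in> Om 0"
    using B.Om_mult by (metis add_0)
  note EM = elements_mult[OF _ _ _ _ B.Om_zero B.Om_add Om0mult]
  have dM: "\<And>A B n k l. A \<in> carrier_mat n k \<Longrightarrow> B \<in> carrier_mat k l \<Longrightarrow> elements_mat A \<subseteq> Om 0
     \<Longrightarrow> map_mat d (A*B) = map_mat d A * B + A * map_mat d B"
    by (rule mat_der_mult[where S="Om 0"], rule addd, erule leibd, assumption+)
  have dbM: "\<And>A B n k l. A \<in> carrier_mat n k \<Longrightarrow> B \<in> carrier_mat k l \<Longrightarrow> elements_mat A \<subseteq> Om 0
     \<Longrightarrow> map_mat db (A*B) = map_mat db A * B + A * map_mat db B"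
    by (rule mat_der_mult[where S="Om 0"], rule adddb, erule leibdb, assumption+)
  have db1: "db 1 = 0"
  proof -
    have "db (1*1) = db 1 * 1 + 1 * db 1" by (rule leibdb[OF B.Om_one])
    then show ?thesis by simp
  qed
  have db0: "db 0 = 0" by (rule der_zero[OF adddb])
  have d0: "d 0 = 0" by (rule der_zero[OF addd])
  define h where "h = G * V"
  have ch: "h \<in> carrier_mat m m" unfolding h_def using G(1) V(1) by simp
  have elh: "elements_mat h \<subseteq> Om 0" unfolding h_def by (rule EM[OF G(1) V(1) G(2) V(2)])
  define g where "g = minv h"
  note GI = minv_props[OF inv[folded h_def] ch, folded g_def]
  have cg: "g \<in> carrier_mat m m" by (rule GI(1))
  have elg: "elements_mat g \<subseteq> Om 0" by (rule GI(2))
  define phi where "phi = transpose_mat U * Phi * V"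
  have cUt: "transpose_mat U \<in> carrier_mat m M" using U(1) by simp
  have elUt: "elements_mat (transpose_mat U) \<subseteq> Om 0" by (rule elements_transpose[OF U(2)])
  have dUt: "map_mat d (transpose_mat U) = 0\<^sub>m m M"
    unfolding map_mat_transpose[symmetric] dU by (rule eq_matI) auto
  have cUP: "transpose_mat U * Phi \<in> carrier_mat m N" using cUt Phi(1) by simp
  have elUP: "elements_mat (transpose_mat U * Phi) \<subseteq> Om 0" by (rule EM[OF cUt Phi(1) elUt Phi(2)])
  have cdPhi: "map_mat d Phi \<in> carrier_mat M N" using Phi(1) by simp
  have cdbG: "map_mat db G \<in> carrier_mat m N" using G(1) by simp
  have cdG: "map_mat d G \<in> carrier_mat m N" using G(1) by simp
  have cGQ: "G * Q \<in> carrier_mat m M" using G(1) Q by simp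
  have cUdP: "transpose_mat U * map_mat d Phi \<in> carrier_mat m N" using cUt cdPhi by simp
  have dphi: "map_mat d phi = transpose_mat U * map_mat d Phi * V"
  proof -
    have "map_mat d phi = map_mat d (transpose_mat U * Phi) * V + (transpose_mat U * Phi) * map_mat d V"
      unfolding phi_def by (rule dM[OF cUP V(1) elUP])
    also have "map_mat d (transpose_mat U * Phi) = map_mat d (transpose_mat U) * Phi + transpose_mat U * map_mat d Phi"
      by (rule dM[OF cUt Phi(1) elUt])
    finally show ?thesis unfolding dUt dV using cUt Phi(1) cdPhi V(1) by simp
  qed
  have cdphi: "map_mat d phi \<in> carrier_mat m m" unfolding dphi using cUdP V(1) by simp
  have dbh: "map_mat db h = map_mat db G * V"
    unfolding h_def dbM[OF G(1) V(1) G(2)] dbV using cdbG V(1) G(1) by simp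
  have hphi: "h * map_mat d phi = G * Q * map_mat d Phi * V"
  proof -
    have "h * map_mat d phi = G * (V * ((transpose_mat U * map_mat d Phi) * V))"
      unfolding h_def dphi by (rule assoc_mult_mat[OF G(1) V(1) mult_carrier_mat[OF cUdP V(1)]])
    also have "V * ((transpose_mat U * map_mat d Phi) * V) = (V * (transpose_mat U * map_mat d Phi)) * V"
      by (rule assoc_mult_mat[OF V(1) cUdP V(1), symmetric])
    also have "V * (transpose_mat U * map_mat d Phi) = Q * map_mat d Phi"
      unfolding QVU by (rule assoc_mult_mat[OF V(1) cUt cdPhi, symmetric])
    also have "G * (Q * map_mat d Phi * V) = G * (Q * map_mat d Phi) * V"
      by (rule assoc_mult_mat[OF G(1) mult_carrier_mat[OF Q cdPhi] V(1), symmetric])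
    also have "G * (Q * map_mat d Phi) = G * Q * map_mat d Phi"
      by (rule assoc_mult_mat[OF G(1) Q cdPhi, symmetric])
    finally show ?thesis .
  qed
  have cDG: "Delta * G \<in> carrier_mat m N" using Delta(1) G(1) by simp
  have elDG: "elements_mat (Delta * G) \<subseteq> Om 0" by (rule EM[OF Delta(1) G(1) Delta(2) G(2)])
  have cdDG': "map_mat d (Delta * G) \<in> carrier_mat m N" using cDG by simp
  have dDh: "map_mat d (Delta * h) = map_mat d (Delta * G) * V"
  proof -
    have "Delta * h = Delta * G * V" unfolding h_def by (rule assoc_mult_mat[OF Delta(1) G(1) V(1), symmetric])
    then have "map_mat d (Delta * h) = map_mat d (Delta * G) * V + (Delta * G) * map_mat d V"
      using dM[OF cDG V(1) elDG] by simp
    then show ?thesis unfolding dV right_mult_zero_mat[OF cDG]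
      by (simp add: right_add_zero_mat[OF mult_carrier_mat[OF cdDG' V(1)]])
  qed
  have cdDG: "map_mat d (Delta * G) \<in> carrier_mat m N" using cDG by simp
  have C1: "map_mat db h + h * map_mat d phi = map_mat d (Delta * h)"
  proof -
    have "map_mat db h + h * map_mat d phi = map_mat db G * V + G * Q * map_mat d Phi * V"
      unfolding dbh hphi ..
    also have "\<dots> = (map_mat db G + G * Q * map_mat d Phi) * V"
      by (rule add_mult_distrib_mat[symmetric, of _ m N]) (use cdbG cGQ cdPhi V(1) in auto)
    finally show ?thesis unfolding H1 dDh .
  qed
  have mg: "minv g = h" by (rule GI(5))
  define W where "W = Delta * h"
  have cW: "W \<in> carrier_mat m m" unfolding W_def using Delta(1) ch by simp
  have elW: "elements_mat W \<subseteq> Om 0" unfolding W_def by (rule EM[OF Delta(1) ch Delta(2) elh])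
  have cdbg: "map_mat db g \<in> carrier_mat m m" using cg by simp
  have cdg: "map_mat d g \<in> carrier_mat m m" using cg by simp
  have cdbh: "map_mat db h \<in> carrier_mat m m" using ch by simp
  have cdW: "map_mat d W \<in> carrier_mat m m" using cW by simp
  have e1: "map_mat db g * h + g * map_mat db h = 0\<^sub>m m m"
  proof -
    have "map_mat db (g * h) = map_mat db g * h + g * map_mat db h" by (rule dbM[OF cg ch elg])
    moreover have "map_mat db (g * h) = 0\<^sub>m m m" unfolding GI(4) by (rule map_one_mat[OF db0 db1])
    ultimately show ?thesis by simp
  qed
  have e2: "map_mat db g * h = - (g * map_mat db h)"
    by (rule mat_add_zero_neg[OF _ _ e1]) (use cdbg ch cg cdbh in auto)
  have e3: "map_mat d (g * W) = map_mat d g * W + g * map_mat d W" by (rule dM[OF cg cW elg])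
  have e4: "h * map_mat d phi = map_mat d W - map_mat db h"
    by (rule add_eq_minus2[OF _ _ _ C1[folded W_def]]) (use cdbh mult_carrier_mat[OF ch cdphi] cdW in auto)
  define K where "K = (map_mat db g - map_mat d g * Delta) * h"
  have K1: "K = map_mat db g * h - map_mat d g * W"
    unfolding K_def W_def
    by (subst minus_mult_distrib_mat[of _ m m]) (use cdbg cdg Delta(1) ch in auto)
  have "K + map_mat d (g * W) = (map_mat db g * h - map_mat d g * W) + (map_mat d g * W + g * map_mat d W)"
    unfolding K1 e3 ..
  also have "\<dots> = map_mat db g * h + g * map_mat d W"
    by (rule comb1) (use cdbg ch cdg cW cg cdW in auto)
  also have "\<dots> = - (g * map_mat db h) + g * map_mat d W" unfolding e2 ..
  also have "\<dots> = g * map_mat d W - g * map_mat db h"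
    by (rule comb2) (use cg cdbh cdW in auto)
  also have "\<dots> = g * (map_mat d W - map_mat db h)"
    by (rule mult_minus_distrib_mat[symmetric]) (use cg cdW cdbh in auto)
  also have "\<dots> = g * (h * map_mat d phi)" unfolding e4 ..
  also have "\<dots> = (g * h) * map_mat d phi" by (rule assoc_mult_mat[symmetric, OF cg ch cdphi])
  also have "\<dots> = map_mat d phi" unfolding GI(4) using cdphi by simp
  finally have K2: "K + map_mat d (g * W) = map_mat d phi" .
  have cgW: "g * W \<in> carrier_mat m m" using cg cW by simp
  have cK: "K \<in> carrier_mat m m" unfolding K_def
    by (rule mult_carrier_mat[OF minus_carrier_mat[OF mult_carrier_mat[OF cdg Delta(1)]] ch])
  have K3: "K = map_mat d phi - map_mat d (g * W)"
    by (rule mat_add_eq_minus[OF _ _ _ K2]) (use cK cdphi cgW in auto)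
  have "map_mat d K = map_mat d (map_mat d phi) - map_mat d (map_mat d (g * W))"
    unfolding K3 by (rule mat_der_minus[OF addd]) (use cdphi cgW in auto)
  also have "\<dots> = 0\<^sub>m m m" unfolding dd0[of d, OF B.d_d] using cdphi cgW cg cW by (auto intro!: eq_matI)
  finally have C2: "map_mat d K = 0\<^sub>m m m" .
  show ?thesis unfolding Let_def g_def[symmetric] h_def[symmetric] phi_def[symmetric] mg
    using C1 C2 unfolding K_def W_def by simp
qed

theorem mainTheorem7:
  fixes Om :: "nat \<Rightarrow> 'w::ring_1 set" and sc :: "complex \<Rightarrow> 'w \<Rightarrow> 'w"
    and d db :: "'w \<Rightarrow> 'w"
    and M N m :: nat
    and X Y P R Q Phi Delta C G U V :: "'w mat"
  assumes bd: "bidga Om sc d db"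
    and dims: "M \<ge> 1" "N \<ge> 1" "m \<ge> 1"
    and X: "X \<in> carrier_mat N N" "elements_mat X \<subseteq> Om 0" "invertible_over (Om 0) X"
    and Y: "Y \<in> carrier_mat M N" "elements_mat Y \<subseteq> Om 0"
    and P: "P \<in> carrier_mat N N" "elements_mat P \<subseteq> Om 0"
    and R: "R \<in> carrier_mat N N" "elements_mat R \<subseteq> Om 0"
    and Q: "Q \<in> carrier_mat N M" "elements_mat Q \<subseteq> Om 0"
    and dR: "map_mat d R = 0\<^sub>m N N"
    and dQ: "map_mat d Q = 0\<^sub>m N M"
    and dbX: "map_mat db X = map_mat d X * P"
    and dbY: "map_mat db Y = map_mat d Y * P"
    and RXQY: "R * X + Q * Y = X * P"
    and Phi: "Phi = Y * minv X"
    and Delta: "Delta \<in> carrier_mat m m" "elements_mat Delta \<subseteq> Om 0"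
    and dbDelta: "map_mat db Delta = map_mat d Delta * Delta"
    and C: "C \<in> carrier_mat m N" "elements_mat C \<subseteq> Om 0"
    and dC: "map_mat d C = 0\<^sub>m m N"
    and G: "G \<in> carrier_mat m N" "elements_mat G \<subseteq> Om 0"
    and dbGX: "map_mat db (G * X) = map_mat d (G * X) * P"
    and GXP: "G * X * P - Delta * (G * X) = C * X"
  shows "map_mat db G + G * Q * map_mat d Phi = map_mat d (Delta * G) \<and>
    ((U \<in> carrier_mat M m \<and> elements_mat U \<subseteq> Om 0 \<and>
      V \<in> carrier_mat N m \<and> elements_mat V \<subseteq> Om 0 \<and>
      Q = V * transpose_mat U \<and>
      map_mat d U = 0\<^sub>m M m \<and> map_mat db U = 0\<^sub>m M m \<and>
      map_mat d V = 0\<^sub>m N m \<and> map_mat db V = 0\<^sub>m N m \<and>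
      invertible_over (Om 0) (G * V)) \<longrightarrow>
     (let g = minv (G * V); phi' = transpose_mat U * Phi * V in
        map_mat db (minv g) + minv g * map_mat d phi' = map_mat d (Delta * minv g) \<and>
        map_mat d ((map_mat db g - map_mat d g * Delta) * minv g) = 0\<^sub>m m m))"
  proof -
  interpret B: bidga Om sc d db by (rule bd)
  have Om0mult: "\<And>x y. x \<in> Om 0 \<Longrightarrow> y \<in> Om 0 \<Longrightarrow> x * y \<in> Om 0"
    using B.Om_mult by (metis add_0)
  note EM = elements_mult[OF _ _ _ _ B.Om_zero B.Om_add Om0mult]
  note XI = minv_props[OF X(3) X(1)]
  have cPhi: "Phi \<in> carrier_mat M N" unfolding Phi using Y(1) XI(1) by simp
  have elPhi: "elements_mat Phi \<subseteq> Om 0" unfolding Phi by (rule EM[OF Y(1) XI(1) Y(2) XI(2)])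
  have H1: "map_mat db G + G * Q * map_mat d Phi = map_mat d (Delta * G)"
    by (rule part1[OF bd X Y P R Q dR dQ dbX RXQY Phi Delta C dC G dbGX GXP])
  show ?thesis
  proof (intro conjI impI)
    show "map_mat db G + G * Q * map_mat d Phi = map_mat d (Delta * G)" by (rule H1)
  next
    assume H: "U \<in> carrier_mat M m \<and> elements_mat U \<subseteq> Om 0 \<and>
      V \<in> carrier_mat N m \<and> elements_mat V \<subseteq> Om 0 \<and>
      Q = V * transpose_mat U \<and>
      map_mat d U = 0\<^sub>m M m \<and> map_mat db U = 0\<^sub>m M m \<and>
      map_mat d V = 0\<^sub>m N m \<and> map_mat db V = 0\<^sub>m N m \<and>
      invertible_over (Om 0) (G * V)"
    then show "let g = minv (G * V); phi' = transpose_mat U * Phi * V in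
        map_mat db (minv g) + minv g * map_mat d phi' = map_mat d (Delta * minv g) \<and>
        map_mat d ((map_mat db g - map_mat d g * Delta) * minv g) = 0\<^sub>m m m"
      using part2[OF bd Q(1) cPhi elPhi Delta G H1] by blast
  qed
qed

end
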